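(* Let $(X,\|\cdot\|)$ be a Banach space, $B_X=\{x\in X:\|x\|\le1\}$ and $B=\{x\in X:\|x\|\ge2\}$. If the ordered pair $(B_X,B)$ has the $UC$ property, then $(X,\|\cdot\|)$ is a uniformly convex Banach space.
   Context: $\mathrm{dist}(A,B)=\inf\{\|a-b\|:a\in A,b\in B\}$. The ordered pair $(A,B)$ has the $UC$ property if for all sequences $\{x_n\},\{z_n\}\subset A$, $\{y_n\}\subset B$ with $\lim_n\|x_n-y_n\|=\lim_n\|z_n-y_n\|=\mathrm{dist}(A,B)$ one has $\lim_n\|x_n-z_n\|=0$. $X$ is uniformly convex if for every $\varepsilon\in(0,2]$, $\delta(\varepsilon)=\inf\{1-\|\frac{x+y}{2}\|: x,y\in B_X,\ \|x-y\|\ge\varepsilon\}>0$. *)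

theory Defs
  imports "HOL-Analysis.Analysis"
begin

definition UC_property :: "'a::real_normed_vector set \<Rightarrow> 'a set \<Rightarrow> bool" where
  "UC_property A B \<longleftrightarrow>
     (\<forall>x z y :: nat \<Rightarrow> 'a.
        (\<forall>n. x n \<in> A \<and> z n \<in> A \<and> y n \<in> B) \<and>
        (\<lambda>n. norm (x n - y n)) \<longlonglongrightarrow> setdist A B \<and>
        (\<lambda>n. norm (z n - y n)) \<longlonglongrightarrow> setdist A B
        \<longrightarrow> (\<lambda>n. norm (x n - z n)) \<longlonglongrightarrow> 0)"

text \<open>Modulus of convexity, valued in the extended reals so that inf of the empty set is +infinity.\<close>
definition modulus_convexity :: "'a::real_normed_vector itself \<Rightarrow> real \<Rightarrow> ereal" where
  "modulus_convexity _ e =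
     Inf ((\<lambda>(x::'a, y). ereal (1 - norm ((x + y) /\<^sub>R 2))) `
          {(x, y). norm x \<le> 1 \<and> norm y \<le> 1 \<and> norm (x - y) \<ge> e})"

definition uniformly_convex :: "'a::real_normed_vector itself \<Rightarrow> bool" where
  "uniformly_convex T \<longleftrightarrow> (\<forall>e. 0 < e \<and> e \<le> 2 \<longrightarrow> modulus_convexity T e > 0)"

end

theory Submission
  imports Defs
begin

theorem theorem44:
  assumes "UC_property (cball (0::'a::banach) 1) {x::'a. norm x \<ge> 2}"
  shows "uniformly_convex TYPE('a)"
proof (rule ccontr)
  assume "\<not> uniformly_convex TYPE('a)"
  then obtain e where e: "0 < e" "e \<le> 2" and nm: "\<not> modulus_convexity TYPE('a) e > 0"
    unfolding uniformly_convex_def by auto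
  have ex: "\<exists>x y::'a. norm x \<le> 1 \<and> norm y \<le> 1 \<and> e \<le> norm (x - y) \<and>
            1 - norm ((x + y) /\<^sub>R 2) < 1 / (real n + 2)" for n
  proof -
    have "modulus_convexity TYPE('a) e < ereal (1 / (real n + 2))"
    proof -
      have "modulus_convexity TYPE('a) e \<le> 0" using nm by (simp add: not_less)
      moreover have "(0::ereal) < ereal (1 / (real n + 2))" by simp
      ultimately show ?thesis by (rule le_less_trans)
    qed
    then obtain p where "p \<in> {(x, y). norm x \<le> 1 \<and> norm y \<le> 1 \<and> norm (x - y) \<ge> e}"
      "(\<lambda>(x::'a, y). ereal (1 - norm ((x + y) /\<^sub>R 2))) p < ereal (1 / (real n + 2))"
      unfolding modulus_convexity_def Inf_less_iff by blast
    then obtain a b where ab: "p = (a, b)" "norm a \<le> 1" "norm b \<le> 1" "e \<le> norm (a - b)"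
      "ereal (1 - norm ((a + b) /\<^sub>R 2)) < ereal (1 / (real n + 2))"
      by (cases p) simp
    from ab(5) have "1 - norm ((a + b) /\<^sub>R 2) < 1 / (real n + 2)" by (simp only: less_ereal.simps(1))
    with ab(2-4) show ?thesis by blast
  qed
  then obtain X Y :: "nat \<Rightarrow> 'a" where XY: "\<And>n. norm (X n) \<le> 1" "\<And>n. norm (Y n) \<le> 1"
    "\<And>n. e \<le> norm (X n - Y n)"
    "\<And>n. 1 - norm ((X n + Y n) /\<^sub>R 2) < 1 / (real n + 2)"
  proof -
    from ex have "\<forall>n. \<exists>p::'a\<times>'a. norm (fst p) \<le> 1 \<and> norm (snd p) \<le> 1 \<and> e \<le> norm (fst p - snd p) \<and>
            1 - norm ((fst p + snd p) /\<^sub>R 2) < 1 / (real n + 2)" by auto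
    from choice[OF this] obtain P :: "nat \<Rightarrow> 'a \<times> 'a" where P: "\<forall>n. norm (fst (P n)) \<le> 1 \<and> norm (snd (P n)) \<le> 1 \<and> e \<le> norm (fst (P n) - snd (P n)) \<and>
            1 - norm ((fst (P n) + snd (P n)) /\<^sub>R 2) < 1 / (real n + 2)"
      by blast
    show ?thesis by (rule that[of "\<lambda>n. fst (P n)" "\<lambda>n. snd (P n)"]) (use P in auto)
  qed
  define W where "W n = (X n + Y n) /\<^sub>R 2" for n
  define U where "U n = (2 / norm (W n)) *\<^sub>R W n" for n
  have Wle: "norm (W n) \<le> 1" for n
  proof -
    have "norm (X n + Y n) \<le> 2" using XY(1,2)[of n] norm_triangle_ineq[of "X n" "Y n"] by linarith
    then show ?thesis by (simp add: W_def)
  qed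
  have Wgt: "1 - norm (W n) < 1 / (real n + 2)" for n using XY(4) W_def by simp
  have half: "1 / (real n + 2) \<le> 1/2" for n by (simp add: field_simps)
  have Wpos: "norm (W n) > 0" for n using Wgt[of n] half[of n] by linarith
  have Unorm: "norm (U n) = 2" for n using Wpos[of n] by (simp add: U_def)
  have key: "norm (2 *\<^sub>R W n - U n) = 2 - 2 * norm (W n)" for n
  proof -
    have "2 *\<^sub>R W n - U n = (2 - 2 / norm (W n)) *\<^sub>R W n" by (simp add: U_def algebra_simps)
    then have "norm (2 *\<^sub>R W n - U n) = \<bar>2 - 2 / norm (W n)\<bar> * norm (W n)" by simp
    also have "\<dots> = (2 / norm (W n) - 2) * norm (W n)"
      using Wpos[of n] Wle[of n] by (simp add: field_simps)
    also have "\<dots> = 2 - 2 * norm (W n)" using Wpos[of n] by (simp add: field_simps)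
    finally show ?thesis .
  qed
  have low: "1 \<le> norm (a - b)" if "norm a \<le> 1" "2 \<le> norm b" for a b :: 'a
    using norm_triangle_ineq2[of b a] norm_minus_commute[of a b] that by linarith
  have bound: "1 \<le> norm (P n - U n) \<and> norm (P n - U n) \<le> 1 + 2 / (real n + 2)"
    if P: "\<And>n. norm (P n) \<le> 1" "\<And>n. norm (Q n) \<le> 1" "\<And>n. P n + Q n = 2 *\<^sub>R W n" for P Q n
  proof
    show "1 \<le> norm (P n - U n)" using low[of "P n" "U n"] P(1) Unorm by simp
    have "P n - U n = (2 *\<^sub>R W n - U n) - Q n" using P(3)[of n] by (simp add: algebra_simps)
    then have "norm (P n - U n) \<le> norm (2 *\<^sub>R W n - U n) + norm (Q n)"
      by (metis norm_triangle_ineq4)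
    also have "\<dots> \<le> 1 + 2 / (real n + 2)" using key[of n] Wgt[of n] P(2)[of n] by simp
    finally show "norm (P n - U n) \<le> 1 + 2 / (real n + 2)" .
  qed
  have sumW: "X n + Y n = 2 *\<^sub>R W n" "Y n + X n = 2 *\<^sub>R W n" for n
    by (simp_all add: W_def algebra_simps)
  have bX: "1 \<le> norm (X n - U n) \<and> norm (X n - U n) \<le> 1 + 2 / (real n + 2)" for n
    by (rule bound[OF XY(1) XY(2) sumW(1)])
  have bY: "1 \<le> norm (Y n - U n) \<and> norm (Y n - U n) \<le> 1 + 2 / (real n + 2)" for n
    by (rule bound[OF XY(2) XY(1) sumW(2)])
  have lim2: "(\<lambda>n. 1 + 2 / (real n + 2)) \<longlonglongrightarrow> (1::real)"
  proof -
    have "(\<lambda>n. 2 / (real n + 2)) \<longlonglongrightarrow> (0::real)"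
    proof -
      have "(\<lambda>n. 2 / real (n + 2)) \<longlonglongrightarrow> (0::real)"
        using LIMSEQ_ignore_initial_segment[OF lim_const_over_n[of 2], of 2] by simp
      then show ?thesis by (simp add: add.commute)
    qed
    from tendsto_add[OF tendsto_const[of 1] this] show ?thesis by simp
  qed
  have limX: "(\<lambda>n. norm (X n - U n)) \<longlonglongrightarrow> 1"
    by (rule tendsto_sandwich[OF _ _ tendsto_const lim2]) (use bX in auto)
  have limY: "(\<lambda>n. norm (Y n - U n)) \<longlonglongrightarrow> 1"
    by (rule tendsto_sandwich[OF _ _ tendsto_const lim2]) (use bY in auto)
  let ?A = "cball (0::'a) 1" and ?B = "{x::'a. norm x \<ge> 2}"
  have inA: "X n \<in> ?A" "Y n \<in> ?A" for n using XY by auto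
  have inB: "U n \<in> ?B" for n using Unorm by simp
  have sd: "setdist ?A ?B = 1"
  proof (rule antisym)
    have "setdist ?A ?B \<le> norm (X n - U n)" for n
      using setdist_le_dist[OF inA(1) inB] by (simp add: dist_norm)
    then show "setdist ?A ?B \<le> 1"
      using LIMSEQ_le_const[OF limX, of "setdist ?A ?B"] by blast
    show "1 \<le> setdist ?A ?B"
      by (rule le_setdistI) (use inA inB low in \<open>auto simp: dist_norm\<close>)
  qed
  have "(\<lambda>n. norm (X n - Y n)) \<longlonglongrightarrow> 0"
  proof -
    have "\<forall>n. X n \<in> ?A \<and> Y n \<in> ?A \<and> U n \<in> ?B" using inA inB by blast
    with limX limY have H: "(\<forall>n. X n \<in> ?A \<and> Y n \<in> ?A \<and> U n \<in> ?B) \<and>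
        (\<lambda>n. norm (X n - U n)) \<longlonglongrightarrow> setdist ?A ?B \<and> (\<lambda>n. norm (Y n - U n)) \<longlonglongrightarrow> setdist ?A ?B"
      unfolding sd by blast
    show ?thesis using assms[unfolded UC_property_def, rule_format, of X Y U, OF H] .
  qed
  then have "eventually (\<lambda>n. norm (X n - Y n) < e) sequentially"
    using e(1) by (rule order_tendstoD)
  then obtain N where "\<forall>n\<ge>N. norm (X n - Y n) < e" unfolding eventually_sequentially by blast
  then have "norm (X N - Y N) < e" by simp
  with XY(3)[of N] show False by simp
qed

end
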